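(* Let $n\ge 3$ and let $CH_n$ be the closed Helm graph. Then $$\chi^+(CH_n)=\begin{cases}5n+1 & \text{if } n \text{ is even},\\ 7n-2 & \text{if } n \text{ is odd}.\end{cases}$$
   Context: The closed Helm graph $CH_n$ has vertices $v, v_1,\dots,v_n,u_1,\dots,u_n$; $v_1\dots v_n$ form a cycle, $u_1\dots u_n$ form a cycle (in this order), $v$ is adjacent to every $v_i$, and $u_i$ is adjacent to $v_i$ for each $i$ (i.e. the Helm graph with its pendant vertices joined into an outer cycle). For a proper colouring $c:V(G)\to\{1,\dots,k\}$ (colour $c_i$ identified with $i$), the colouring sum is $\sum_{i=1}^k i\,\theta(c_i)=\sum_v c(v)$, $\theta(c_i)$ the number of vertices of colour $c_i$. The $\chi^+$-chromatic sum $\chi^+(G)$ is the maximum colouring sum over all proper colourings $c:V(G)\to\{1,\dots,\chi(G)\}$, $\chi(G)$ the chromatic number. *)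

theory Defs
  imports Main
begin

definition proper_colouring :: "'a set \<Rightarrow> ('a \<Rightarrow> 'a \<Rightarrow> bool) \<Rightarrow> nat \<Rightarrow> ('a \<Rightarrow> nat) \<Rightarrow> bool" where
  "proper_colouring V E k c \<longleftrightarrow>
     (\<forall>x\<in>V. c x \<in> {1..k}) \<and> (\<forall>x\<in>V. \<forall>y\<in>V. E x y \<longrightarrow> c x \<noteq> c y)"

definition chromatic_number :: "'a set \<Rightarrow> ('a \<Rightarrow> 'a \<Rightarrow> bool) \<Rightarrow> nat" where
  "chromatic_number V E = (LEAST k. \<exists>c. proper_colouring V E k c)"

definition colouring_sum :: "'a set \<Rightarrow> ('a \<Rightarrow> nat) \<Rightarrow> nat" where
  "colouring_sum V c = (\<Sum>x\<in>V. c x)"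

definition chi_plus :: "'a set \<Rightarrow> ('a \<Rightarrow> 'a \<Rightarrow> bool) \<Rightarrow> nat" where
  "chi_plus V E = Max {colouring_sum V c | c. proper_colouring V E (chromatic_number V E) c}"

(* Closed Helm graph CH_n: hub v, inner cycle v_0..v_{n-1}, outer cycle u_0..u_{n-1} *)
datatype helm_vertex = Hub | Inner nat | Outer nat

definition closed_helm_vertices :: "nat \<Rightarrow> helm_vertex set" where
  "closed_helm_vertices n = {Hub} \<union> Inner ` {..<n} \<union> Outer ` {..<n}"

definition closed_helm_arc :: "nat \<Rightarrow> helm_vertex \<Rightarrow> helm_vertex \<Rightarrow> bool" where
  "closed_helm_arc n x y \<longleftrightarrow>
     (\<exists>i<n. x = Hub \<and> y = Inner i) \<or>
     (\<exists>i<n. x = Inner i \<and> y = Inner ((i + 1) mod n)) \<or>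
     (\<exists>i<n. x = Outer i \<and> y = Outer ((i + 1) mod n)) \<or>
     (\<exists>i<n. x = Inner i \<and> y = Outer i)"

definition closed_helm_adj :: "nat \<Rightarrow> helm_vertex \<Rightarrow> helm_vertex \<Rightarrow> bool" where
  "closed_helm_adj n x y \<longleftrightarrow> closed_helm_arc n x y \<or> closed_helm_arc n y x"

end

theory Submission imports Defs begin

lemma nxt: assumes "i < (n::nat)" shows "(i+1) mod n = (if i+1 = n then 0 else i+1)"
proof (cases "i+1 = n")
  case True then show ?thesis by simp
next
  case False with assms have "i+1<n" by simp
  then show ?thesis using False by (simp only: mod_less if_False)
qed

lemma adjs:
  assumes "i<n"
  shows "closed_helm_adj n Hub (Inner i)" "closed_helm_adj n (Inner i) (Inner ((i+1) mod n))"
    "closed_helm_adj n (Outer i) (Outer ((i+1) mod n))" "closed_helm_adj n (Inner i) (Outer i)"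
  using assms unfolding closed_helm_adj_def closed_helm_arc_def by blast+

lemma verts: "Hub \<in> closed_helm_vertices n" "i<n \<Longrightarrow> Inner i \<in> closed_helm_vertices n"
     "i<n \<Longrightarrow> Outer i \<in> closed_helm_vertices n"
    by (auto simp: closed_helm_vertices_def)

lemma helm_proper_iff:
 "proper_colouring (closed_helm_vertices n) (closed_helm_adj n) k c \<longleftrightarrow>
  c Hub \<in> {1..k} \<and> (\<forall>i<n. c (Inner i) \<in> {1..k} \<and> c (Outer i) \<in> {1..k} \<and> c Hub \<noteq> c (Inner i)
     \<and> c (Inner i) \<noteq> c (Inner ((i+1) mod n)) \<and> c (Outer i) \<noteq> c (Outer ((i+1) mod n))
     \<and> c (Inner i) \<noteq> c (Outer i))" (is "?L \<longleftrightarrow> ?R")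
proof
  assume L: ?L
  have P: "\<And>x y. x \<in> closed_helm_vertices n \<Longrightarrow> y \<in> closed_helm_vertices n \<Longrightarrow> closed_helm_adj n x y \<Longrightarrow> c x \<noteq> c y"
    and Q: "\<And>x. x \<in> closed_helm_vertices n \<Longrightarrow> c x \<in> {1..k}"
    using L unfolding proper_colouring_def by blast+
  have m: "\<And>i. i<n \<Longrightarrow> (i+1) mod n < n" by simp
  show ?R
  proof (intro conjI allI impI)
    show "c Hub \<in> {1..k}" by (rule Q[OF verts(1)])
    fix i assume i: "i<n"
    show "c (Inner i) \<in> {1..k}" "c (Outer i) \<in> {1..k}" using Q verts i by blast+
    show "c Hub \<noteq> c (Inner i)" by (rule P[OF verts(1) verts(2)[OF i] adjs(1)[OF i]])
    show "c (Inner i) \<noteq> c (Inner ((i+1) mod n))" by (rule P[OF verts(2)[OF i] verts(2)[OF m[OF i]] adjs(2)[OF i]])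
    show "c (Outer i) \<noteq> c (Outer ((i+1) mod n))" by (rule P[OF verts(3)[OF i] verts(3)[OF m[OF i]] adjs(3)[OF i]])
    show "c (Inner i) \<noteq> c (Outer i)" by (rule P[OF verts(2)[OF i] verts(3)[OF i] adjs(4)[OF i]])
  qed
next
  assume R: ?R
  show ?L unfolding proper_colouring_def
  proof (intro conjI ballI impI)
    fix x assume "x \<in> closed_helm_vertices n" then show "c x \<in> {1..k}" using R
      by (auto simp: closed_helm_vertices_def)
  next
    fix x y assume "x \<in> closed_helm_vertices n" "y \<in> closed_helm_vertices n" "closed_helm_adj n x y"
    have a: "closed_helm_arc n x y \<Longrightarrow> c x \<noteq> c y" for x y using R unfolding closed_helm_arc_def by auto
    then show "c x \<noteq> c y" using \<open>closed_helm_adj n x y\<close> unfolding closed_helm_adj_def by metis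
  qed
qed

lemma helm_sum:
  "colouring_sum (closed_helm_vertices n) c = c Hub + (\<Sum>i<n. c (Inner i)) + (\<Sum>i<n. c (Outer i))"
proof -
  have V: "closed_helm_vertices n = insert Hub (Inner ` {..<n} \<union> Outer ` {..<n})"
    by (auto simp: closed_helm_vertices_def)
  have "(\<Sum>x\<in>Inner ` {..<n} \<union> Outer ` {..<n}. c x) = (\<Sum>x\<in>Inner ` {..<n}. c x) + (\<Sum>x\<in>Outer ` {..<n}. c x)"
    by (rule sum.union_disjoint) auto
  also have "\<dots> = (\<Sum>i<n. c (Inner i)) + (\<Sum>i<n. c (Outer i))"
    by (simp add: sum.reindex inj_on_def)
  finally have "(\<Sum>x\<in>Inner ` {..<n} \<union> Outer ` {..<n}. c x) = (\<Sum>i<n. c (Inner i)) + (\<Sum>i<n. c (Outer i))" .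
  moreover have "Hub \<notin> Inner ` {..<n} \<union> Outer ` {..<n}" by auto
  ultimately show ?thesis unfolding colouring_sum_def V by (simp add: add.assoc)
qed

lemma proper_mono: "proper_colouring V E k c \<Longrightarrow> k \<le> k' \<Longrightarrow> proper_colouring V E k' c"
  unfolding proper_colouring_def by auto

lemma cyc_card:
  assumes "\<forall>i<n. f i \<noteq> f ((i+1) mod (n::nat))"
  shows "2 * card {i. i<n \<and> f i = x} \<le> n"
proof -
  define A where "A = {i. i<n \<and> f i = x}"
  define g where "g i = (i+1) mod n" for i
  have inj: "inj_on g {..<n}" unfolding inj_on_def g_def
  proof (intro ballI impI)
    fix i j assume "i \<in> {..<n}" "j \<in> {..<n}" "(i + 1) mod n = (j + 1) mod n"
    then show "i = j" using nxt[of i n] nxt[of j n] by (auto split: if_splits)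
  qed
  have "g ` A \<subseteq> {..<n} - A" using assms unfolding A_def g_def by auto
  then have "card (g ` A) \<le> card ({..<n} - A)" by (intro card_mono) auto
  moreover have "card (g ` A) = card A" by (rule card_image, rule inj_on_subset[OF inj]) (auto simp: A_def)
  moreover have "card ({..<n} - A) = n - card A" by (subst card_Diff_subset) (auto simp: A_def)
  moreover have "card A \<le> n" unfolding A_def by (rule order_trans[OF card_mono[of "{..<n}"]]) auto
  ultimately show ?thesis unfolding A_def by linarith
qed

lemma count_sum: "(\<Sum>i<n. if P i then 1 else 0) = card {i. i<(n::nat) \<and> P i}"
proof (induction n)
  case 0 then show ?case by simp
next
  case (Suc n)
  have "{i. i<Suc n \<and> P i} = (if P n then insert n {i. i<n \<and> P i} else {i. i<n \<and> P i})"
    by (auto simp: less_Suc_eq)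
  then show ?case using Suc by simp
qed

lemma sum_bound:
  assumes "\<forall>i<n. f i \<le> b + p*(if f i = x then 1 else 0) + q*(if f i = y then 1 else 0)"
  shows "(\<Sum>i<n. f i) \<le> b*n + p*card{i. i<n \<and> f i = x} + q*card{i. i<(n::nat) \<and> f i = y}"
proof -
  have "(\<Sum>i<n. f i) \<le> (\<Sum>i<n. b + p*(if f i = x then 1 else 0) + q*(if f i = y then 1 else 0))"
    using assms by (intro sum_mono) auto
  also have "\<dots> = b*n + p*(\<Sum>i<n. if f i = x then 1 else 0) + q*(\<Sum>i<n. if f i = y then 1 else 0)"
    by (simp add: sum.distrib sum_distrib_left)
  finally show ?thesis by (simp add: count_sum)
qed

lemma cover:
  assumes "\<forall>i<n. f i = x \<or> f i = y"
  shows "n \<le> card{i. i<n \<and> f i = x} + card{i. i<(n::nat) \<and> f i = y}"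
proof -
  have "{..<n} \<subseteq> {i. i<n \<and> f i = x} \<union> {i. i<(n::nat) \<and> f i = y}" using assms by auto
  then have "card {..<n} \<le> card ({i. i<n \<and> f i = x} \<union> {i. i<(n::nat) \<and> f i = y})" by (intro card_mono) auto
  also have "\<dots> \<le> card{i. i<n \<and> f i = x} + card{i. i<(n::nat) \<and> f i = y}" by (rule card_Un_le)
  finally show ?thesis by simp
qed

lemma alt_sum: "(\<Sum>i<2*m. if even i then (a::nat) else b) = m*(a+b)"
proof (induction m)
  case 0 then show ?case by simp
next
  case (Suc m)
  have "2 * Suc m = Suc (Suc (2*m))" by simp
  then show ?case using Suc by simp
qed

lemma sum_bound3:
  assumes "\<forall>i<n. f i \<le> b + p*(if f i = x then 1 else 0) + q*(if f i = y then 1 else 0) + r*(if f i = z then 1 else 0)"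
  shows "(\<Sum>i<n. f i) \<le> b*n + p*card{i. i<n \<and> f i = x} + q*card{i. i<(n::nat) \<and> f i = y} + r*card{i. i<(n::nat) \<and> f i = z}"
proof -
  have "(\<Sum>i<n. f i) \<le> (\<Sum>i<n. b + p*(if f i = x then 1 else 0) + q*(if f i = y then 1 else 0) + r*(if f i = z then 1 else 0))"
    using assms by (intro sum_mono) auto
  also have "\<dots> = b*n + p*(\<Sum>i<n. if f i = x then 1 else 0) + q*(\<Sum>i<n. if f i = y then 1 else 0) + r*(\<Sum>i<n. if f i = z then 1 else 0)"
    by (simp add: sum.distrib sum_distrib_left)
  finally show ?thesis by (simp add: count_sum)
qed

lemma card_none: "\<forall>i<n. f i \<noteq> h \<Longrightarrow> card {i. i<(n::nat) \<and> f i = h} = 0"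
  by auto

lemma half: "2*(a::nat) \<le> n \<Longrightarrow> n \<le> 2*k+1 \<Longrightarrow> a \<le> k" by presburger

lemma even_upper:
  assumes P: "proper_colouring (closed_helm_vertices n) (closed_helm_adj n) 3 c" and n: "n = 2*k" "k \<ge> 1"
  shows "colouring_sum (closed_helm_vertices n) c \<le> 10*k+1"
proof -
  define f where "f i = c (Inner i)" for i
  define g where "g i = c (Outer i)" for i
  define h where "h = c Hub"
  have R: "h \<in> {1..3}" "\<forall>i<n. f i \<in> {1..3} \<and> g i \<in> {1..3} \<and> h \<noteq> f i \<and> f i \<noteq> f ((i+1) mod n) \<and> g i \<noteq> g ((i+1) mod n)"
    using P unfolding helm_proper_iff f_def g_def h_def by auto
  have cf: "\<And>x. 2 * card {i. i<n \<and> f i = x} \<le> n" by (rule cyc_card) (use R in auto)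
  have cg: "\<And>x. 2 * card {i. i<n \<and> g i = x} \<le> n" by (rule cyc_card) (use R in auto)
  have fh: "card {i. i<n \<and> f i = h} = 0" by (rule card_none) (use R in auto)
  have cf': "card {i. i<n \<and> f i = x} \<le> k" for x by (rule half[OF cf[of x]]) (use n in simp)
  have cg': "card {i. i<n \<and> g i = x} \<le> k" for x by (rule half[OF cg[of x]]) (use n in simp)
  have sg: "(\<Sum>i<n. g i) \<le> 1*n + 2*card{i. i<n \<and> g i = 3} + 1*card{i. i<n \<and> g i = 2} + 0*card{i. i<n \<and> g i = 1}"
    by (rule sum_bound3) (use R in auto)
  have sf: "(\<Sum>i<n. f i) \<le> 1*n + 2*card{i. i<n \<and> f i = 3} + 1*card{i. i<n \<and> f i = 2} + 0*card{i. i<n \<and> f i = 1}"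
    by (rule sum_bound3) (use R in auto)
  have S: "colouring_sum (closed_helm_vertices n) c = h + (\<Sum>i<n. f i) + (\<Sum>i<n. g i)"
    unfolding helm_sum f_def g_def h_def ..
  have "h = 1 \<or> h = 2 \<or> h = 3" using R(1) by auto
  then show ?thesis
  proof (elim disjE)
    assume h: "h = 1"
    have fh': "card {i. i<n \<and> f i = 1} = 0" using fh h by simp
    show ?thesis using S sf sg cf[of 3] cf[of 2] cg[of 3] cg[of 2] n cf'[of 4] cf'[of 3] cf'[of 2] cg'[of 4] cg'[of 3] cg'[of 2] fh' h by linarith
  next
    assume h: "h = 2"
    have fh': "card {i. i<n \<and> f i = 2} = 0" using fh h by simp
    show ?thesis using S sf sg cf[of 3] cg[of 3] cg[of 2] n cf'[of 4] cf'[of 3] cf'[of 2] cg'[of 4] cg'[of 3] cg'[of 2] fh' h by linarith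
  next
    assume h: "h = 3"
    have fh': "card {i. i<n \<and> f i = 3} = 0" using fh h by simp
    show ?thesis using S sf sg cf[of 2] cg[of 3] cg[of 2] n cf'[of 4] cf'[of 3] cf'[of 2] cg'[of 4] cg'[of 3] cg'[of 2] fh' h by linarith
  qed
qed

lemma odd_upper:
  assumes P: "proper_colouring (closed_helm_vertices n) (closed_helm_adj n) 4 c" and n: "n = 2*k+1" "k \<ge> 1"
  shows "colouring_sum (closed_helm_vertices n) c \<le> 14*k+5"
proof -
  define f where "f i = c (Inner i)" for i
  define g where "g i = c (Outer i)" for i
  define h where "h = c Hub"
  have R: "h \<in> {1..4}" "\<forall>i<n. f i \<in> {1..4} \<and> g i \<in> {1..4} \<and> h \<noteq> f i \<and> f i \<noteq> f ((i+1) mod n) \<and> g i \<noteq> g ((i+1) mod n)"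
    using P unfolding helm_proper_iff f_def g_def h_def by auto
  have cf: "\<And>x. 2 * card {i. i<n \<and> f i = x} \<le> n" by (rule cyc_card) (use R in auto)
  have cg: "\<And>x. 2 * card {i. i<n \<and> g i = x} \<le> n" by (rule cyc_card) (use R in auto)
  have fh: "card {i. i<n \<and> f i = h} = 0" by (rule card_none) (use R in auto)
  have cf': "card {i. i<n \<and> f i = x} \<le> k" for x by (rule half[OF cf[of x]]) (use n in simp)
  have cg': "card {i. i<n \<and> g i = x} \<le> k" for x by (rule half[OF cg[of x]]) (use n in simp)
  have sg: "(\<Sum>i<n. g i) \<le> 2*n + 2*card{i. i<n \<and> g i = 4} + 1*card{i. i<n \<and> g i = 3} + 0*card{i. i<n \<and> g i = 1}"
    by (rule sum_bound3) (use R in auto)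
  have S: "colouring_sum (closed_helm_vertices n) c = h + (\<Sum>i<n. f i) + (\<Sum>i<n. g i)"
    unfolding helm_sum f_def g_def h_def ..
  have "h = 1 \<or> h = 2 \<or> h = 3 \<or> h = 4" using R(1) by auto
  then show ?thesis
  proof (elim disjE)
    assume h: "h = 1"
    have fh': "card {i. i<n \<and> f i = 1} = 0" using fh h by simp
    have sf: "(\<Sum>i<n. f i) \<le> 2*n + 2*card{i. i<n \<and> f i = 4} + 1*card{i. i<n \<and> f i = 3} + 0*card{i. i<n \<and> f i = 1}"
      by (rule sum_bound3) (use R h in auto)
    show ?thesis using h S sf sg cf[of 4] cf[of 3] cg[of 4] cg[of 3] n cf'[of 4] cf'[of 3] cf'[of 2] cg'[of 4] cg'[of 3] cg'[of 2] fh' h by linarith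
  next
    assume h: "h = 2"
    have fh': "card {i. i<n \<and> f i = 2} = 0" using fh h by simp
    have sf: "(\<Sum>i<n. f i) \<le> 1*n + 3*card{i. i<n \<and> f i = 4} + 2*card{i. i<n \<and> f i = 3} + 1*card{i. i<n \<and> f i = 2}"
      by (rule sum_bound3) (use R h in auto)
    show ?thesis using h S sf sg cf[of 4] cf[of 3] cg[of 4] cg[of 3] n cf'[of 4] cf'[of 3] cf'[of 2] cg'[of 4] cg'[of 3] cg'[of 2] fh' h by linarith
  next
    assume h: "h = 3"
    have fh': "card {i. i<n \<and> f i = 3} = 0" using fh h by simp
    have sf: "(\<Sum>i<n. f i) \<le> 1*n + 3*card{i. i<n \<and> f i = 4} + 2*card{i. i<n \<and> f i = 3} + 1*card{i. i<n \<and> f i = 2}"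
      by (rule sum_bound3) (use R h in auto)
    show ?thesis using h S sf sg cf[of 4] cf[of 2] cg[of 4] cg[of 3] n cf'[of 4] cf'[of 3] cf'[of 2] cg'[of 4] cg'[of 3] cg'[of 2] fh' h by linarith
  next
    assume h: "h = 4"
    have fh': "card {i. i<n \<and> f i = 4} = 0" using fh h by simp
    have sf: "(\<Sum>i<n. f i) \<le> 1*n + 3*card{i. i<n \<and> f i = 4} + 2*card{i. i<n \<and> f i = 3} + 1*card{i. i<n \<and> f i = 2}"
      by (rule sum_bound3) (use R h in auto)
    show ?thesis using h S sf sg cf[of 3] cf[of 2] cg[of 4] cg[of 3] n cf'[of 4] cf'[of 3] cf'[of 2] cg'[of 4] cg'[of 3] cg'[of 2] fh' h by linarith
  qed
qed


definition ceven :: "helm_vertex \<Rightarrow> nat" where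
  "ceven v = (case v of Hub \<Rightarrow> 1 | Inner i \<Rightarrow> if even i then 3 else 2 | Outer i \<Rightarrow> if even i then 2 else 3)"

lemma ceven_proper:
  assumes "n = 2*k" "k \<ge> 1"
  shows "proper_colouring (closed_helm_vertices n) (closed_helm_adj n) 3 ceven"
  unfolding helm_proper_iff
proof (intro conjI allI impI)
  show "ceven Hub \<in> {1..3}" by (simp add: ceven_def)
  fix i assume i: "i < n"
  have m: "(i+1) mod n = (if i+1 = n then 0 else i+1)" by (rule nxt[OF i])
  have o: "i+1 = n \<Longrightarrow> odd i" using assms by presburger
  show "ceven (Inner i) \<in> {1..3}" "ceven (Outer i) \<in> {1..3}" "ceven Hub \<noteq> ceven (Inner i)"
    "ceven (Inner i) \<noteq> ceven (Outer i)" by (auto simp: ceven_def)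
  show "ceven (Inner i) \<noteq> ceven (Inner ((i+1) mod n))" "ceven (Outer i) \<noteq> ceven (Outer ((i+1) mod n))"
    using m o by (auto simp: ceven_def)
qed

lemma ceven_sum:
  assumes "n = 2*k"
  shows "colouring_sum (closed_helm_vertices n) ceven = 10*k+1"
proof -
  have "(\<Sum>i<n. ceven (Inner i)) = k*5" using alt_sum[where m=k and a=3 and b=2] assms by (simp add: ceven_def)
  moreover have "(\<Sum>i<n. ceven (Outer i)) = k*5" using alt_sum[where m=k and a=2 and b=3] assms by (simp add: ceven_def)
  ultimately show ?thesis by (simp add: helm_sum ceven_def)
qed

definition codd :: "nat \<Rightarrow> helm_vertex \<Rightarrow> nat" where
  "codd k v = (case v of Hub \<Rightarrow> 1 | Inner i \<Rightarrow> if i = 2*k then 2 else if even i then 4 else 3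
      | Outer i \<Rightarrow> if i = 0 then 2 else if even i then 3 else 4)"

lemma codd_proper:
  assumes "n = 2*k+1" "k \<ge> 1"
  shows "proper_colouring (closed_helm_vertices n) (closed_helm_adj n) 4 (codd k)"
  unfolding helm_proper_iff
proof (intro conjI allI impI)
  show "codd k Hub \<in> {1..4}" by (simp add: codd_def)
  fix i assume i: "i < n"
  have m: "(i+1) mod n = (if i+1 = n then 0 else i+1)" by (rule nxt[OF i])
  have o: "i+1 = n \<Longrightarrow> even i \<and> i = 2*k" using assms by presburger
  have o2: "i + 1 = 2*k \<Longrightarrow> odd i" by presburger
  show "codd k (Inner i) \<in> {1..4}" "codd k (Outer i) \<in> {1..4}" "codd k Hub \<noteq> codd k (Inner i)"
    by (auto simp: codd_def)
  show "codd k (Inner i) \<noteq> codd k (Outer i)" using assms by (auto simp: codd_def)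
  show "codd k (Inner i) \<noteq> codd k (Inner ((i+1) mod n))" "codd k (Outer i) \<noteq> codd k (Outer ((i+1) mod n))"
    using m o o2 assms by (auto simp: codd_def)
qed

lemma codd_sum:
  assumes "n = 2*k+1"
  shows "colouring_sum (closed_helm_vertices n) (codd k) = 14*k+5"
proof -
  have "(\<Sum>i<2*k. codd k (Inner i)) = (\<Sum>i<2*k. if even i then 4 else 3)"
    by (rule sum.cong) (auto simp: codd_def)
  then have A: "(\<Sum>i<n. codd k (Inner i)) = k*7 + 2" using alt_sum[where m=k and a=4 and b=3] assms by (simp add: codd_def)
  have "(\<Sum>i<n. codd k (Outer i)) = codd k (Outer 0) + (\<Sum>i<2*k. codd k (Outer (Suc i)))"
    using assms sum.lessThan_Suc_shift[of "\<lambda>i. codd k (Outer i)" "2*k"] by simp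
  also have "(\<Sum>i<2*k. codd k (Outer (Suc i))) = (\<Sum>i<2*k. if even i then 4 else 3)"
    by (rule sum.cong) (auto simp: codd_def)
  finally have B: "(\<Sum>i<n. codd k (Outer i)) = 2 + k*7" using alt_sum[where m=k and a=4 and b=3] by (simp add: codd_def)
  show ?thesis using A B by (simp add: helm_sum codd_def)
qed


lemma chrom_even:
  assumes n: "n = 2*k" "k \<ge> 2"
  shows "chromatic_number (closed_helm_vertices n) (closed_helm_adj n) = 3"
  unfolding chromatic_number_def
proof (rule Least_equality)
  show "\<exists>c. proper_colouring (closed_helm_vertices n) (closed_helm_adj n) 3 c"
    using ceven_proper[of n k] n by auto
next
  fix y assume "\<exists>c. proper_colouring (closed_helm_vertices n) (closed_helm_adj n) y c"
  then obtain c where c: "proper_colouring (closed_helm_vertices n) (closed_helm_adj n) y c" by blast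
  show "3 \<le> y"
  proof (rule ccontr)
    assume "\<not> 3 \<le> y"
    then have "proper_colouring (closed_helm_vertices n) (closed_helm_adj n) 2 c"
      by (intro proper_mono[OF c]) auto
    then have R: "c Hub \<in> {1..2}" "\<forall>i<n. c (Inner i) \<in> {1..2} \<and> c Hub \<noteq> c (Inner i) \<and> c (Inner i) \<noteq> c (Inner ((i+1) mod n))"
      unfolding helm_proper_iff by auto
    have "0 < n" "1 < n" using n by auto
    moreover have "(0+1) mod n = 1" using n by simp
    ultimately have "c (Inner 0) \<in> {1..2}" "c (Inner 1) \<in> {1..2}" "c Hub \<noteq> c (Inner 0)" "c Hub \<noteq> c (Inner 1)"
      "c (Inner 0) \<noteq> c (Inner 1)" using R(2) by metis+
    then show False using R(1) by auto
  qed
qed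

lemma chrom_odd:
  assumes n: "n = 2*k+1" "k \<ge> 1"
  shows "chromatic_number (closed_helm_vertices n) (closed_helm_adj n) = 4"
  unfolding chromatic_number_def
proof (rule Least_equality)
  show "\<exists>c. proper_colouring (closed_helm_vertices n) (closed_helm_adj n) 4 c"
    using codd_proper[of n k] n by auto
next
  fix y assume "\<exists>c. proper_colouring (closed_helm_vertices n) (closed_helm_adj n) y c"
  then obtain c where c: "proper_colouring (closed_helm_vertices n) (closed_helm_adj n) y c" by blast
  show "4 \<le> y"
  proof (rule ccontr)
    assume "\<not> 4 \<le> y"
    then have "proper_colouring (closed_helm_vertices n) (closed_helm_adj n) 3 c"
      by (intro proper_mono[OF c]) auto
    then have R: "c Hub \<in> {1..3}" "\<forall>i<n. c (Inner i) \<in> {1..3} \<and> c Hub \<noteq> c (Inner i) \<and> c (Inner i) \<noteq> c (Inner ((i+1) mod n))"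
      unfolding helm_proper_iff by auto
    define f where "f i = c (Inner i)" for i
    have cf: "\<And>x. 2 * card {i. i<n \<and> f i = x} \<le> n" by (rule cyc_card) (use R in \<open>auto simp: f_def\<close>)
    have cf': "card {i. i<n \<and> f i = x} \<le> k" for x by (rule half[OF cf[of x]]) (use n in simp)
    have "\<exists>a b. \<forall>i<n. f i = a \<or> f i = b"
    proof -
      have "c Hub = 1 \<or> c Hub = 2 \<or> c Hub = 3" using R(1) by auto
      then show ?thesis
      proof (elim disjE)
        assume "c Hub = 1" then have "\<forall>i<n. f i = 2 \<or> f i = 3" using R(2) by (force simp: f_def)
        then show ?thesis by blast
      next
        assume "c Hub = 2" then have "\<forall>i<n. f i = 1 \<or> f i = 3" using R(2) by (force simp: f_def)
        then show ?thesis by blast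
      next
        assume "c Hub = 3" then have "\<forall>i<n. f i = 1 \<or> f i = 2" using R(2) by (force simp: f_def)
        then show ?thesis by blast
      qed
    qed
    then obtain a b where "\<forall>i<n. f i = a \<or> f i = b" by blast
    from cover[OF this] cf'[of a] cf'[of b] n show False by linarith
  qed
qed

theorem theorem2p10:
  fixes n :: nat
  assumes "n \<ge> 3"
  shows "chi_plus (closed_helm_vertices n) (closed_helm_adj n) =
           (if even n then 5 * n + 1 else 7 * n - 2)"
proof (cases "even n")
  case True
  then obtain k where n: "n = 2*k" by blast
  with assms have k: "k \<ge> 2" by simp
  let ?S = "{colouring_sum (closed_helm_vertices n) c |c. proper_colouring (closed_helm_vertices n) (closed_helm_adj n) (chromatic_number (closed_helm_vertices n) (closed_helm_adj n)) c}"
  have ch: "chromatic_number (closed_helm_vertices n) (closed_helm_adj n) = 3" by (rule chrom_even[OF n k])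
  have up: "\<forall>s\<in>?S. s \<le> 10*k+1" unfolding ch using even_upper[OF _ n] k by auto
  have mem: "10*k+1 \<in> ?S" unfolding ch using ceven_proper[OF n] ceven_sum[OF n] k by (auto intro!: exI[of _ ceven])
  have fin: "finite ?S" by (rule finite_subset[of _ "{..10*k+1}"]) (use up in auto)
  have "Max ?S = 10*k+1" by (rule Max_eqI[OF fin]) (use up mem in auto)
  then show ?thesis unfolding chi_plus_def using True n by simp
next
  case False
  then obtain k where n: "n = 2*k+1" using oddE by blast
  with assms have k: "k \<ge> 1" by simp
  let ?S = "{colouring_sum (closed_helm_vertices n) c |c. proper_colouring (closed_helm_vertices n) (closed_helm_adj n) (chromatic_number (closed_helm_vertices n) (closed_helm_adj n)) c}"
  have ch: "chromatic_number (closed_helm_vertices n) (closed_helm_adj n) = 4" by (rule chrom_odd[OF n k])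
  have up: "\<forall>s\<in>?S. s \<le> 14*k+5" unfolding ch using odd_upper[OF _ n k] by auto
  have mem: "14*k+5 \<in> ?S" unfolding ch using codd_proper[OF n k] codd_sum[OF n] by (auto intro!: exI[of _ "codd k"])
  have fin: "finite ?S" by (rule finite_subset[of _ "{..14*k+5}"]) (use up in auto)
  have "Max ?S = 14*k+5" by (rule Max_eqI[OF fin]) (use up mem in auto)
  then show ?thesis unfolding chi_plus_def using False n by simp
qed

end
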